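(* Let $f:\mathbb{R}^n\to(-\infty,+\infty]$ be proper, lower semicontinuous and prox-bounded with threshold $\lambda_f>0$, let $0<\lambda<\lambda_f$, and suppose $\operatorname{dom}f$ is convex. Then the following are equivalent: (a) $\partial_p^\lambda f(x)\ne\varnothing$ for every $x\in\operatorname{dom}f$; (b) $P_\lambda f=\operatorname{conv}(P_\lambda f)$ and $\operatorname{dom}[\partial\operatorname{conv}(f+\lambda^{-1}j)]=\operatorname{dom}f$; (c) $P_\lambda f$ is maximally monotone and $\operatorname{dom}[\partial\operatorname{conv}(f+\lambda^{-1}j)]=\operatorname{dom}f$; (d) $f+\lambda^{-1}j$ is convex and $\operatorname{dom}\partial f=\operatorname{dom}f$; (e) $\partial_p^\lambda f=\partial f$ and $\operatorname{dom}\partial f=\operatorname{dom}f$.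
   Context: $j:=\frac12\|\cdot\|^2$. $P_\lambda f(x):=\operatorname{argmin}_y\{f(y)+\frac1{2\lambda}\|y-x\|^2\}$ (set-valued); $\operatorname{conv}(P_\lambda f)$ is the set-valued map $x\mapsto\operatorname{conv}(P_\lambda f(x))$. Prox-bounded with threshold $\lambda_f=\sup\{\lambda>0:\inf_y\{f(y)+\frac1{2\lambda}\|y-x\|^2\}>-\infty\text{ for some }x\}$. $v\in\partial_p^\lambda f(x)$ iff $x\in\operatorname{dom}f$ and $f(y)\ge f(x)+\langle v,y-x\rangle-\frac1{2\lambda}\|y-x\|^2$ for all $y$. $\operatorname{conv}g$ is the convex hull of a function $g$; $\partial$ is the limiting subdifferential. *)

theory Defs
  imports "HOL-Analysis.Analysis" "HOL-Library.Extended_Real"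
begin

definition edom :: "('a \<Rightarrow> ereal) \<Rightarrow> 'a set" where
  "edom f = {x. f x < \<infinity>}"

definition proper_fun :: "('a \<Rightarrow> ereal) \<Rightarrow> bool" where
  "proper_fun f \<longleftrightarrow> (\<forall>x. f x \<noteq> -\<infinity>) \<and> edom f \<noteq> {}"

definition lsc_fun :: "('a::topological_space \<Rightarrow> ereal) \<Rightarrow> bool" where
  "lsc_fun f \<longleftrightarrow> (\<forall>x. f x \<le> Liminf (at x) f)"

definition jfun :: "'a::real_normed_vector \<Rightarrow> real" where
  "jfun x = (norm x)\<^sup>2 / 2"

definition moreau_env :: "('a::real_normed_vector \<Rightarrow> ereal) \<Rightarrow> real \<Rightarrow> 'a \<Rightarrow> ereal" where
  "moreau_env f lam x = (INF y. f y + ereal ((norm (y - x))\<^sup>2 / (2 * lam)))"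

definition prox_bounded :: "('a::real_normed_vector \<Rightarrow> ereal) \<Rightarrow> bool" where
  "prox_bounded f \<longleftrightarrow> (\<exists>lam>0. \<exists>x. moreau_env f lam x > -\<infinity>)"

definition prox_threshold :: "('a::real_normed_vector \<Rightarrow> ereal) \<Rightarrow> ereal" where
  "prox_threshold f = Sup {ereal lam | lam. lam > 0 \<and> (\<exists>x. moreau_env f lam x > -\<infinity>)}"

definition prox_map :: "('a::real_normed_vector \<Rightarrow> ereal) \<Rightarrow> real \<Rightarrow> 'a \<Rightarrow> 'a set" where
  "prox_map f lam x = {y. \<forall>z. f y + ereal ((norm (y - x))\<^sup>2 / (2 * lam))
                              \<le> f z + ereal ((norm (z - x))\<^sup>2 / (2 * lam))}"

definition conv_map :: "('a::real_vector \<Rightarrow> 'b::real_vector set) \<Rightarrow> 'a \<Rightarrow> 'b set" where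
  "conv_map T x = convex hull (T x)"

definition monotone_map :: "('a::real_inner \<Rightarrow> 'a set) \<Rightarrow> bool" where
  "monotone_map T \<longleftrightarrow> (\<forall>x y u v. u \<in> T x \<longrightarrow> v \<in> T y \<longrightarrow> inner (x - y) (u - v) \<ge> 0)"

definition maximal_monotone :: "('a::real_inner \<Rightarrow> 'a set) \<Rightarrow> bool" where
  "maximal_monotone T \<longleftrightarrow> monotone_map T \<and>
     (\<forall>x u. (\<forall>y v. v \<in> T y \<longrightarrow> inner (x - y) (u - v) \<ge> 0) \<longrightarrow> u \<in> T x)"

definition epigraph :: "('a \<Rightarrow> ereal) \<Rightarrow> ('a \<times> real) set" where
  "epigraph g = {(x, t). g x \<le> ereal t}"

definition econvex :: "('a::real_vector \<Rightarrow> ereal) \<Rightarrow> bool" where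
  "econvex g \<longleftrightarrow> convex (epigraph g)"

definition conv_fun :: "('a::real_vector \<Rightarrow> ereal) \<Rightarrow> 'a \<Rightarrow> ereal" where
  "conv_fun g x = (SUP h \<in> {h. econvex h \<and> (\<forall>y. h y \<le> g y)}. h x)"

definition reg_subdiff :: "('a::real_inner \<Rightarrow> ereal) \<Rightarrow> 'a \<Rightarrow> 'a set" where
  "reg_subdiff g x = {v. \<bar>g x\<bar> \<noteq> \<infinity> \<and>
      (\<forall>e>0. \<exists>d>0. \<forall>y. norm (y - x) < d \<longrightarrow>
          g y \<ge> g x + ereal (inner v (y - x) - e * norm (y - x)))}"

definition lim_subdiff :: "('a::real_inner \<Rightarrow> ereal) \<Rightarrow> 'a \<Rightarrow> 'a set" where
  "lim_subdiff g x = {v. \<bar>g x\<bar> \<noteq> \<infinity> \<and>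
      (\<exists>X V. X \<longlonglongrightarrow> x \<and> (\<lambda>k. g (X k)) \<longlonglongrightarrow> g x \<and> V \<longlonglongrightarrow> v \<and>
             (\<forall>k. V k \<in> reg_subdiff g (X k)))}"

definition subdiff_dom :: "('a \<Rightarrow> 'a set) \<Rightarrow> 'a set" where
  "subdiff_dom T = {x. T x \<noteq> {}}"

definition prox_subdiff :: "real \<Rightarrow> ('a::real_inner \<Rightarrow> ereal) \<Rightarrow> 'a \<Rightarrow> 'a set" where
  "prox_subdiff lam f x = {v. x \<in> edom f \<and>
      (\<forall>y. f y \<ge> f x + ereal (inner v (y - x) - (norm (y - x))\<^sup>2 / (2 * lam)))}"

end

theory Submission
  imports Defs
begin

definition lscp :: "('a::topological_space \<Rightarrow> ereal) \<Rightarrow> bool" where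
  "lscp \<phi> \<longleftrightarrow> (\<forall>w0 c. c < \<phi> w0 \<longrightarrow> eventually (\<lambda>w. c < \<phi> w) (at w0))"

lemma lscp_open:
  assumes "lscp \<phi>" shows "open {w. c < \<phi> w}"
proof (subst open_subopen, intro ballI)
  fix w0 assume "w0 \<in> {w. c < \<phi> w}"
  then have h: "c < \<phi> w0" by simp
  then have "eventually (\<lambda>w. c < \<phi> w) (at w0)" using assms unfolding lscp_def by blast
  then obtain S where "open S" "w0 \<in> S" "\<forall>x\<in>S. x \<noteq> w0 \<longrightarrow> c < \<phi> x"
    unfolding eventually_at_topological by blast
  then show "\<exists>T. open T \<and> w0 \<in> T \<and> T \<subseteq> {w. c < \<phi> w}" using h by (intro exI[of _ S]) auto
qed

lemma lsc_fun_lscp: "lsc_fun f \<Longrightarrow> lscp f"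
  unfolding lsc_fun_def lscp_def
  by (metis le_Liminf_iff)

lemma lscp_min_compact:
  assumes "lscp \<phi>" "compact K" "K \<noteq> {}"
  shows "\<exists>v\<in>K. \<forall>w\<in>K. \<phi> v \<le> \<phi> w"
proof (rule ccontr)
  assume nm: "\<not> (\<exists>v\<in>K. \<forall>w\<in>K. \<phi> v \<le> \<phi> w)"
  define m where "m = (INF w\<in>K. \<phi> w)"
  have lt: "m < \<phi> v" if "v \<in> K" for v
  proof -
    have "m \<le> \<phi> v" unfolding m_def using that by (rule INF_lower)
    moreover have "m \<noteq> \<phi> v"
    proof
      assume "m = \<phi> v"
      then have "\<forall>w\<in>K. \<phi> v \<le> \<phi> w" unfolding m_def by (metis INF_lower)
      then show False using nm that by blast
    qed
    ultimately show ?thesis by simp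
  qed
  define T where "T = {U. open U \<and> (\<exists>c>m. \<forall>w\<in>U. c < \<phi> w)}"
  have "K \<subseteq> \<Union>T"
  proof
    fix v assume "v \<in> K"
    then obtain c where c: "m < c" "c < \<phi> v" using lt dense by blast
    then have "v \<in> {w. c < \<phi> w}" "{w. c < \<phi> w} \<in> T"
      unfolding T_def using lscp_open[OF assms(1)] by auto
    then show "v \<in> \<Union>T" by blast
  qed
  moreover have "\<And>B. B \<in> T \<Longrightarrow> open B" unfolding T_def by auto
  ultimately obtain T' where T': "T' \<subseteq> T" "finite T'" "K \<subseteq> \<Union>T'"
    using compactE[OF assms(2)] by metis
  have "\<forall>U\<in>T'. \<exists>c>m. \<forall>w\<in>U. c < \<phi> w" using T' unfolding T_def by blast
  then obtain cf where cf: "\<And>U. U \<in> T' \<Longrightarrow> cf U > m \<and> (\<forall>w\<in>U. cf U < \<phi> w)" by metis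
  have "T' \<noteq> {}" using T' assms(3) by auto
  define cs where "cs = Min (cf ` T')"
  have "cs > m" unfolding cs_def using T' \<open>T' \<noteq> {}\<close> cf by (subst Min_gr_iff) auto
  moreover have "cs \<le> \<phi> w" if "w \<in> K" for w
  proof -
    obtain U where "U \<in> T'" "w \<in> U" using T' \<open>w \<in> K\<close> by blast
    then have "cs \<le> cf U" unfolding cs_def using T' by auto
    also have "\<dots> < \<phi> w" using cf \<open>U \<in> T'\<close> \<open>w \<in> U\<close> by blast
    finally show ?thesis by simp
  qed
  then have "cs \<le> m" unfolding m_def by (rule INF_greatest)
  ultimately show False by simp
qed

lemma lscp_add:
  assumes "lscp f" "\<forall>w. f w \<noteq> -\<infinity>" "continuous_on UNIV h"
  shows "lscp (\<lambda>w. f w + ereal (h w))"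
  unfolding lscp_def
proof (intro allI impI)
  fix w0 c assume c: "c < f w0 + ereal (h w0)"
  show "eventually (\<lambda>w. c < f w + ereal (h w)) (at w0)"
  proof (cases c)
    case MInf
    have "-\<infinity> < f w + ereal (h w)" for w using assms(2) by (cases "f w") auto
    then show ?thesis using MInf by simp
  next
    case PInf then show ?thesis using c by simp
  next
    case (real r)
    have "ereal (r - h w0) < f w0" using c real by (cases "f w0") auto
    then obtain d where d: "ereal (r - h w0) < d" "d < f w0" using dense by blast
    then obtain dr where dr: "d = ereal dr" by (cases d) auto
    define e where "e = dr - (r - h w0)"
    have e: "e > 0" using d dr e_def by simp
    have ev1: "eventually (\<lambda>w. ereal dr < f w) (at w0)" using assms(1) d dr unfolding lscp_def by blast
    have "(h \<longlongrightarrow> h w0) (at w0)" using assms(3) by (simp add: continuous_on_def)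
    then have ev2: "eventually (\<lambda>w. dist (h w) (h w0) < e) (at w0)" using e by (rule tendstoD)
    show ?thesis using ev1 ev2
    proof eventually_elim
      case (elim w)
      have "r < dr + h w" using elim e_def by (auto simp: dist_real_def)
      then show ?case using elim real by (cases "f w") auto
    qed
  qed
qed

lemma lscp_closed_argmin:
  assumes "lscp \<phi>" shows "closed {v. \<forall>w. \<phi> v \<le> \<phi> w}"
proof -
  have "- {v. \<forall>w. \<phi> v \<le> \<phi> w} = (\<Union>w. {v. \<phi> w < \<phi> v})" by (auto simp: not_le) (meson leD)
  moreover have "open (\<Union>w. {v. \<phi> w < \<phi> v})" using lscp_open[OF assms] by blast
  ultimately show ?thesis unfolding closed_def by simp
qed

lemma coercive_radius:
  fixes \<delta> \<alpha> \<beta> r0 :: real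
  assumes "\<delta> > 0"
  shows "\<exists>R\<ge>1. \<forall>t\<ge>R. \<delta> * t^2 - \<alpha> * t - \<beta> > r0"
proof -
  define R where "R = (\<bar>\<alpha>\<bar> + \<bar>\<beta>\<bar> + \<bar>r0\<bar> + \<delta>) / \<delta> + 1"
  have R1: "R \<ge> 1" unfolding R_def using assms by (simp add: divide_nonneg_pos)
  have "\<delta> * t^2 - \<alpha> * t - \<beta> > r0" if t: "t \<ge> R" for t
  proof -
    have t1: "t \<ge> 1" using t R1 by simp
    have "\<delta> * R \<ge> \<bar>\<alpha>\<bar> + \<bar>\<beta>\<bar> + \<bar>r0\<bar> + \<delta>" unfolding R_def using assms by (simp add: field_simps)
    then have dt: "\<delta> * t - \<bar>\<alpha>\<bar> \<ge> \<bar>\<beta>\<bar> + \<bar>r0\<bar> + \<delta>"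
      using t assms mult_left_mono[of R t \<delta>] by linarith
    have "t * (\<delta> * t - \<bar>\<alpha>\<bar>) \<ge> 1 * (\<delta> * t - \<bar>\<alpha>\<bar>)"
      using t1 dt assms by (intro mult_right_mono) auto
    moreover have "\<alpha> * t \<le> \<bar>\<alpha>\<bar> * t" using t1 by (intro mult_right_mono) auto
    moreover have "\<delta> * t^2 = t * (\<delta> * t)" by (simp add: power2_eq_square)
    ultimately show ?thesis using dt assms by (simp add: algebra_simps)
  qed
  then show ?thesis using R1 by blast
qed

lemma lscp_min_coercive:
  fixes \<phi> :: "'a::euclidean_space \<Rightarrow> ereal"
  assumes "lscp \<phi>" "closed F" "w0 \<in> F" "\<phi> w0 < \<infinity>" "\<delta> > 0"
    and bnd: "\<And>w. ereal (\<delta> * (norm w)^2 - \<alpha> * norm w - \<beta>) \<le> \<phi> w"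
  shows "\<exists>v\<in>F. \<forall>w\<in>F. \<phi> v \<le> \<phi> w"
proof -
  have "\<phi> w0 \<noteq> -\<infinity>" using bnd[of w0] by auto
  then obtain r0 where r0: "\<phi> w0 = ereal r0" using assms(4) by (cases "\<phi> w0") auto
  obtain R where R: "R \<ge> 1" "\<forall>t\<ge>R. \<delta> * t^2 - \<alpha> * t - \<beta> > r0"
    using coercive_radius[OF assms(5)] by blast
  define R' where "R' = max R (norm w0)"
  define K where "K = F \<inter> cball 0 R'"
  have "compact K" unfolding K_def using assms(2) by (simp add: compact_Int_closed compact_cball Int_commute closed_Int_compact)
  moreover have "K \<noteq> {}" using assms(3) unfolding K_def R'_def by auto
  ultimately obtain v where v: "v \<in> K" "\<forall>w\<in>K. \<phi> v \<le> \<phi> w"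
    using lscp_min_compact[OF assms(1)] by blast
  have "\<phi> v \<le> \<phi> w" if "w \<in> F" for w
  proof (cases "norm w \<le> R'")
    case True then show ?thesis using v that unfolding K_def by auto
  next
    case False
    then have "norm w \<ge> R" unfolding R'_def by auto
    then have "ereal r0 < ereal (\<delta> * (norm w)^2 - \<alpha> * norm w - \<beta>)" using R by auto
    also have "\<dots> \<le> \<phi> w" by (rule bnd)
    finally have "\<phi> w0 < \<phi> w" using r0 by simp
    moreover have "\<phi> v \<le> \<phi> w0" using v assms(3) unfolding K_def R'_def by auto
    ultimately show ?thesis by simp
  qed
  then show ?thesis using v unfolding K_def by blast
qed

lemma ereal_shift: "(e' + ereal b \<le> e + ereal a) \<longleftrightarrow> (e' + ereal (b - a) \<le> e)"
  by (cases e; cases e') auto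

lemma ereal_shift_mono: "e' + ereal b \<le> e \<Longrightarrow> b' \<le> b + a \<Longrightarrow> e' + ereal b' \<le> e + ereal a"
  by (cases e; cases e') auto

lemma norm_add_sq:
  fixes a b :: "'a::real_inner"
  shows "(norm (a + b))^2 = (norm a)^2 + 2 * inner a b + (norm b)^2"
  by (simp add: power2_norm_eq_inner inner_add_left inner_add_right inner_commute)

lemma norm_sq_split:
  fixes x y z :: "'a::real_inner"
  shows "(norm (y - z))^2 = (norm (y - x))^2 + 2 * inner (y - x) (x - z) + (norm (x - z))^2"
  using norm_add_sq[of "y - x" "x - z"] by simp

lemma prox_subdiff_iff:
  fixes f :: "'a::real_inner \<Rightarrow> ereal"
  assumes "lam > 0"
  shows "v \<in> prox_subdiff lam f x \<longleftrightarrow> x \<in> edom f \<and>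
    (\<forall>y. f x + ereal ((norm (x - z))^2 / (2*lam) + inner (v + (1/lam) *\<^sub>R (x - z)) (y - x))
         \<le> f y + ereal ((norm (y - z))^2 / (2*lam)))"
proof -
  have eq: "(norm (x - z))^2 / (2*lam) + inner (v + (1/lam) *\<^sub>R (x - z)) (y - x) - (norm (y - z))^2 / (2*lam)
      = inner v (y - x) - (norm (y - x))^2 / (2 * lam)" for y
  proof -
    have "(norm (y - z))^2 = (norm (y - x))^2 + 2 * inner (y - x) (x - z) + (norm (x - z))^2"
      by (rule norm_sq_split)
    moreover have "inner (v + (1/lam) *\<^sub>R (x - z)) (y - x) = inner v (y - x) + inner (y - x) (x - z) / lam"
      by (simp add: inner_add_left inner_scaleR_left) (simp add: inner_commute)
    ultimately show ?thesis using assms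
      by (simp only:) (simp add: field_simps)
  qed
  show ?thesis unfolding prox_subdiff_def
    by (simp only: mem_Collect_eq ereal_shift eq)
qed

lemma jfun_eq: "jfun y / lam = (norm (y - 0))^2 / (2 * lam)"
  by (simp add: jfun_def)

lemma econvexD:
  assumes "econvex h" "h x \<le> ereal a" "h y \<le> ereal b" "0 \<le> t" "t \<le> 1"
  shows "h ((1 - t) *\<^sub>R x + t *\<^sub>R y) \<le> ereal ((1 - t) * a + t * b)"
proof -
  have "(x, a) \<in> epigraph h" "(y, b) \<in> epigraph h" using assms unfolding epigraph_def by auto
  moreover have c: "convex (epigraph h)" using assms(1) unfolding econvex_def .
  ultimately have "(1 - t) *\<^sub>R (x, a) + t *\<^sub>R (y, b) \<in> epigraph h"
    using assms(4,5) by (intro convexD[OF c]) auto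
  then show ?thesis unfolding epigraph_def by simp
qed

lemma econvex_affine: "econvex (\<lambda>w. ereal (inner p w + c))"
  unfolding econvex_def
proof (rule convexI)
  fix X Y :: "'a \<times> real" and u v :: real
  assume X: "X \<in> epigraph (\<lambda>w. ereal (inner p w + c))" and Y: "Y \<in> epigraph (\<lambda>w. ereal (inner p w + c))"
    and uv: "0 \<le> u" "0 \<le> v" "u + v = 1"
  obtain x a where Xd: "X = (x, a)" by (cases X)
  obtain y b where Yd: "Y = (y, b)" by (cases Y)
  have h1: "inner p x + c \<le> a" "inner p y + c \<le> b" using X Y Xd Yd unfolding epigraph_def by auto
  have "u * (inner p x + c) \<le> u * a" "v * (inner p y + c) \<le> v * b"
    using h1 uv by (auto intro: mult_left_mono)
  then have "u * inner p x + v * inner p y + (u + v) * c \<le> u * a + v * b" by (simp add: algebra_simps)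
  then show "u *\<^sub>R X + v *\<^sub>R Y \<in> epigraph (\<lambda>w. ereal (inner p w + c))"
    using uv Xd Yd unfolding epigraph_def by (simp add: inner_add_right)
qed

lemma epigraph_conv_fun: "epigraph (conv_fun g) = (\<Inter>h\<in>{h. econvex h \<and> (\<forall>y. h y \<le> g y)}. epigraph h)"
  unfolding epigraph_def conv_fun_def by (auto simp: SUP_le_iff)

lemma econvex_conv_fun: "econvex (conv_fun g)"
  unfolding econvex_def epigraph_conv_fun by (rule convex_INT) (auto simp: econvex_def)

lemma conv_fun_le: "conv_fun g x \<le> g x"
  unfolding conv_fun_def by (rule SUP_least) auto

lemma conv_fun_ge: "econvex h \<Longrightarrow> (\<forall>y. h y \<le> g y) \<Longrightarrow> h x \<le> conv_fun g x"
  unfolding conv_fun_def by (rule SUP_upper) auto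

lemma conv_fun_id: "econvex g \<Longrightarrow> conv_fun g = g"
  by (rule ext, rule antisym[OF conv_fun_le conv_fun_ge]) auto

lemma reg_to_convex:
  fixes h :: "'a::real_inner \<Rightarrow> ereal"
  assumes cv: "econvex h" and v: "v \<in> reg_subdiff h x"
  shows "h x + ereal (inner v (y - x)) \<le> h y"
proof (rule ccontr)
  assume "\<not> ?thesis"
  then have lt: "h y < h x + ereal (inner v (y - x))" by simp
  from v have fin: "\<bar>h x\<bar> \<noteq> \<infinity>" and sub: "\<forall>e>0. \<exists>d>0. \<forall>y. norm (y - x) < d \<longrightarrow>
          h y \<ge> h x + ereal (inner v (y - x) - e * norm (y - x))" unfolding reg_subdiff_def by auto
  then obtain a where a: "h x = ereal a" by (cases "h x") auto
  have "\<exists>b. h y \<le> ereal b \<and> b < a + inner v (y - x)"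
  proof (cases "h y")
    case (real r) then show ?thesis using lt a by (intro exI[of _ r]) auto
  next
    case PInf then show ?thesis using lt a by simp
  next
    case MInf then show ?thesis by (intro exI[of _ "a + inner v (y - x) - 1"]) auto
  qed
  then obtain b where b: "h y \<le> ereal b" "b < a + inner v (y - x)" by blast
  have yx: "y \<noteq> x"
  proof
    assume "y = x" then show False using b a by simp
  qed
  define \<delta> where "\<delta> = a + inner v (y - x) - b"
  have \<delta>: "\<delta> > 0" using b \<delta>_def by simp
  define n where "n = norm (y - x)"
  have n: "n > 0" using yx n_def by simp
  define e where "e = \<delta> / (2 * n)"
  have e: "e > 0" using \<delta> n e_def by simp
  obtain d where d: "d > 0" "\<forall>y. norm (y - x) < d \<longrightarrow> h y \<ge> h x + ereal (inner v (y - x) - e * norm (y - x))"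
    using sub e by blast
  define t where "t = min (1/2) (d / (2 * n))"
  have t: "t > 0" "t \<le> 1" "t * n < d"
    using d n unfolding t_def by (auto simp: min_def field_simps)
  define w where "w = (1 - t) *\<^sub>R x + t *\<^sub>R y"
  have wx: "w - x = t *\<^sub>R (y - x)" unfolding w_def by (simp add: algebra_simps)
  have nw: "norm (w - x) = t * n" using wx t unfolding n_def by simp
  have hw1: "h w \<le> ereal ((1 - t) * a + t * b)" unfolding w_def
    using econvexD[OF cv, of x a y b t] a b t by simp
  have hw2: "h w \<ge> h x + ereal (inner v (w - x) - e * norm (w - x))"
  proof -
    have "norm (w - x) < d" using nw t by simp
    then show ?thesis using d(2) by blast
  qed
  have "h x + ereal (inner v (w - x) - e * norm (w - x)) \<le> ereal ((1 - t) * a + t * b)"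
    using hw2 hw1 by (rule order_trans)
  then have "ereal (a + (inner v (w - x) - e * norm (w - x))) \<le> ereal ((1 - t) * a + t * b)"
    using a by simp
  then have "a + inner v (w - x) - e * norm (w - x) \<le> (1 - t) * a + t * b"
    by simp
  moreover have "inner v (w - x) = t * inner v (y - x)" using wx by simp
  moreover have "e * norm (w - x) = t * \<delta> / 2" using nw n unfolding e_def by (simp add: field_simps)
  moreover have "t * b = t * a + t * inner v (y - x) - t * \<delta>" unfolding \<delta>_def by (simp add: algebra_simps)
  moreover have "(1 - t) * a = a - t * a" by (simp add: algebra_simps)
  ultimately have "t * \<delta> \<le> t * \<delta> / 2" by linarith
  then show False using t \<delta> by simp
qed

lemma lim_to_convex:
  fixes h :: "'a::real_inner \<Rightarrow> ereal"
  assumes cv: "econvex h" and v: "v \<in> lim_subdiff h x"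
  shows "h x + ereal (inner v (y - x)) \<le> h y"
proof -
  from v have "\<bar>h x\<bar> \<noteq> \<infinity> \<and> (\<exists>X V. X \<longlonglongrightarrow> x \<and> (\<lambda>k. h (X k)) \<longlonglongrightarrow> h x \<and> V \<longlonglongrightarrow> v \<and>
             (\<forall>k. V k \<in> reg_subdiff h (X k)))" unfolding lim_subdiff_def by simp
  then obtain X V where fin: "\<bar>h x\<bar> \<noteq> \<infinity>" and X: "X \<longlonglongrightarrow> x" and hX: "(\<lambda>k. h (X k)) \<longlonglongrightarrow> h x"
    and V: "V \<longlonglongrightarrow> v" and sub: "\<forall>k. V k \<in> reg_subdiff h (X k)"
    by auto
  obtain a where a: "h x = ereal a" using fin by (cases "h x") auto
  have ineq: "h (X k) + ereal (inner (V k) (y - X k)) \<le> h y" for k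
    using reg_to_convex[OF cv] sub by blast
  have finX: "\<bar>h (X k)\<bar> \<noteq> \<infinity>" for k using spec[OF sub, of k] unfolding reg_subdiff_def by simp
  show ?thesis
  proof (cases "h y")
    case PInf then show ?thesis by simp
  next
    case MInf
    then show ?thesis using ineq[of 0] finX[of 0] by (cases "h (X 0)") auto
  next
    case (real r)
    have le: "real_of_ereal (h (X k)) + inner (V k) (y - X k) \<le> r" for k
      using ineq[of k] finX[of k] real by (cases "h (X k)") auto
    have "(\<lambda>k. real_of_ereal (h (X k)) + inner (V k) (y - X k)) \<longlonglongrightarrow> a + inner v (y - x)"
      using hX a X V by (intro tendsto_intros) auto
    then have "a + inner v (y - x) \<le> r" using le by (intro LIMSEQ_le_const2) auto
    then show ?thesis using a real by simp
  qed
qed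

lemma prox_in_reg:
  fixes f :: "'a::real_inner \<Rightarrow> ereal"
  assumes lam: "lam > 0" and nm: "\<forall>w. f w \<noteq> -\<infinity>" and v: "v \<in> prox_subdiff lam f x"
  shows "v \<in> reg_subdiff f x"
proof -
  from v have x: "x \<in> edom f" and ineq: "\<forall>y. f y \<ge> f x + ereal (inner v (y - x) - (norm (y - x))\<^sup>2 / (2 * lam))"
    unfolding prox_subdiff_def by auto
  have fin: "\<bar>f x\<bar> \<noteq> \<infinity>" using x nm unfolding edom_def by (cases "f x") auto
  have "\<exists>d>0. \<forall>y. norm (y - x) < d \<longrightarrow> f y \<ge> f x + ereal (inner v (y - x) - e * norm (y - x))"
    if e: "e > 0" for e
  proof (intro exI[of _ "2 * lam * e"] conjI allI impI)
    show "2 * lam * e > 0" using lam e by simp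
    fix y assume y: "norm (y - x) < 2 * lam * e"
    have "(norm (y - x))\<^sup>2 \<le> (2 * lam * e) * norm (y - x)"
      unfolding power2_eq_square using y by (intro mult_right_mono) auto
    then have "(norm (y - x))\<^sup>2 / (2 * lam) \<le> e * norm (y - x)" using lam by (simp add: field_simps)
    then have "f x + ereal (inner v (y - x) - e * norm (y - x)) \<le> f x + ereal (inner v (y - x) - (norm (y - x))\<^sup>2 / (2 * lam))"
      by (intro add_left_mono) simp
    also have "\<dots> \<le> f y" using ineq by blast
    finally show "f y \<ge> f x + ereal (inner v (y - x) - e * norm (y - x))" .
  qed
  then show ?thesis using fin unfolding reg_subdiff_def by blast
qed

lemma prox_in_lim:
  fixes f :: "'a::real_inner \<Rightarrow> ereal"
  assumes lam: "lam > 0" and nm: "\<forall>w. f w \<noteq> -\<infinity>" and v: "v \<in> prox_subdiff lam f x"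
  shows "v \<in> lim_subdiff f x"
proof -
  have r: "v \<in> reg_subdiff f x" using prox_in_reg[OF assms] .
  then have "\<bar>f x\<bar> \<noteq> \<infinity>" unfolding reg_subdiff_def by simp
  then show ?thesis unfolding lim_subdiff_def using r
    by (intro CollectI conjI exI[of _ "\<lambda>k. x"] exI[of _ "\<lambda>k. v"]) auto
qed

lemma reg_f_to_g:
  fixes f :: "'a::real_inner \<Rightarrow> ereal"
  assumes lam: "lam > 0" and v: "v \<in> reg_subdiff f x"
  shows "v + (1/lam) *\<^sub>R x \<in> reg_subdiff (\<lambda>x. f x + ereal (jfun x / lam)) x"
proof -
  from v have fin: "\<bar>f x\<bar> \<noteq> \<infinity>" and sub: "\<forall>e>0. \<exists>d>0. \<forall>y. norm (y - x) < d \<longrightarrow>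
          f y \<ge> f x + ereal (inner v (y - x) - e * norm (y - x))" unfolding reg_subdiff_def by auto
  have key: "jfun x / lam + inner (v + (1/lam) *\<^sub>R x) (y - x) - e * norm (y - x)
      \<le> inner v (y - x) - e * norm (y - x) + jfun y / lam" for y e
  proof -
    have "(norm (y - 0))^2 = (norm (y - x))^2 + 2 * inner (y - x) (x - 0) + (norm (x - 0))^2"
      by (rule norm_sq_split)
    moreover have "inner (v + (1/lam) *\<^sub>R x) (y - x) = inner v (y - x) + inner (y - x) x / lam"
      by (simp add: inner_add_left inner_scaleR_left) (simp add: inner_commute)
    moreover have "(norm (y - x))^2 / (2 * lam) \<ge> 0" using lam by simp
    ultimately show ?thesis using lam unfolding jfun_def
      by (simp only:) (simp add: field_simps)
  qed
  have "\<exists>d>0. \<forall>y. norm (y - x) < d \<longrightarrow> f y + ereal (jfun y / lam) \<ge>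
     f x + ereal (jfun x / lam) + ereal (inner (v + (1/lam) *\<^sub>R x) (y - x) - e * norm (y - x))"
    if e: "e > 0" for e
  proof -
    obtain d where d: "d > 0" "\<forall>y. norm (y - x) < d \<longrightarrow> f y \<ge> f x + ereal (inner v (y - x) - e * norm (y - x))"
      using sub e by blast
    show ?thesis
    proof (intro exI[of _ d] conjI allI impI)
      fix y assume "norm (y - x) < d"
      then have h: "f x + ereal (inner v (y - x) - e * norm (y - x)) \<le> f y" using d by blast
      have "f x + ereal (jfun x / lam + (inner (v + (1/lam) *\<^sub>R x) (y - x) - e * norm (y - x))) \<le> f y + ereal (jfun y / lam)"
        by (rule ereal_shift_mono[OF h]) (use key[of y e] in simp)
      then show "f x + ereal (jfun x / lam) + ereal (inner (v + (1/lam) *\<^sub>R x) (y - x) - e * norm (y - x))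
          \<le> f y + ereal (jfun y / lam)" by (simp add: add.assoc)
    qed (use d in simp)
  qed
  moreover have "\<bar>f x + ereal (jfun x / lam)\<bar> \<noteq> \<infinity>" using fin by (cases "f x") auto
  ultimately show ?thesis unfolding reg_subdiff_def by blast
qed

lemma gsub_to_prox:
  fixes f :: "'a::real_inner \<Rightarrow> ereal"
  assumes lam: "lam > 0" and x: "x \<in> edom f"
    and h: "\<forall>y. f x + ereal (jfun x / lam) + ereal (inner w (y - x)) \<le> f y + ereal (jfun y / lam)"
  shows "w - (1/lam) *\<^sub>R x \<in> prox_subdiff lam f x"
  unfolding prox_subdiff_iff[OF lam, where z = 0]
  using x h by (simp add: jfun_eq add.assoc)

lemma prox_to_gsub:
  fixes f :: "'a::real_inner \<Rightarrow> ereal"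
  assumes lam: "lam > 0" and v: "v \<in> prox_subdiff lam f x"
  shows "f x + ereal (jfun x / lam) + ereal (inner (v + (1/lam) *\<^sub>R x) (y - x)) \<le> f y + ereal (jfun y / lam)"
  using v unfolding prox_subdiff_iff[OF lam, where z = 0]
  by (simp add: jfun_eq add.assoc)

lemma lim_to_prox:
  fixes f :: "'a::real_inner \<Rightarrow> ereal"
  assumes lam: "lam > 0" and cv: "econvex (\<lambda>x. f x + ereal (jfun x / lam))"
    and v: "v \<in> lim_subdiff f x"
  shows "v \<in> prox_subdiff lam f x"
proof -
  from v have "\<bar>f x\<bar> \<noteq> \<infinity> \<and> (\<exists>X V. X \<longlonglongrightarrow> x \<and> (\<lambda>k. f (X k)) \<longlonglongrightarrow> f x \<and> V \<longlonglongrightarrow> v \<and>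
             (\<forall>k. V k \<in> reg_subdiff f (X k)))" unfolding lim_subdiff_def by simp
  then obtain X V where fin: "\<bar>f x\<bar> \<noteq> \<infinity>" and X: "X \<longlonglongrightarrow> x" and fX: "(\<lambda>k. f (X k)) \<longlonglongrightarrow> f x"
    and V: "V \<longlonglongrightarrow> v" and sub: "\<forall>k. V k \<in> reg_subdiff f (X k)"
    by auto
  obtain a where a: "f x = ereal a" using fin by (cases "f x") auto
  have finX: "\<bar>f (X k)\<bar> \<noteq> \<infinity>" for k using spec[OF sub, of k] unfolding reg_subdiff_def by simp
  have pk: "V k \<in> prox_subdiff lam f (X k)" for k
  proof -
    have r: "V k + (1/lam) *\<^sub>R X k \<in> reg_subdiff (\<lambda>x. f x + ereal (jfun x / lam)) (X k)"
      using reg_f_to_g[OF lam] sub by blast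
    have "X k \<in> edom f" using finX[of k] unfolding edom_def by (cases "f (X k)") auto
    moreover have "\<forall>y. f (X k) + ereal (jfun (X k) / lam) + ereal (inner (V k + (1/lam) *\<^sub>R X k) (y - X k))
        \<le> f y + ereal (jfun y / lam)"
      using reg_to_convex[OF cv r] by simp
    ultimately show ?thesis using gsub_to_prox[OF lam] by fastforce
  qed
  have ineq: "f (X k) + ereal (inner (V k) (y - X k) - (norm (y - X k))\<^sup>2 / (2 * lam)) \<le> f y" for k y
    using pk[of k] unfolding prox_subdiff_def by blast
  have "f x + ereal (inner v (y - x) - (norm (y - x))\<^sup>2 / (2 * lam)) \<le> f y" for y
  proof (cases "f y")
    case PInf then show ?thesis by simp
  next
    case MInf
    then show ?thesis using ineq[of 0 y] finX[of 0] by (cases "f (X 0)") auto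
  next
    case (real r)
    have le: "real_of_ereal (f (X k)) + (inner (V k) (y - X k) - (norm (y - X k))\<^sup>2 / (2 * lam)) \<le> r" for k
      using ineq[of k y] finX[of k] real by (cases "f (X k)") auto
    have "(\<lambda>k. real_of_ereal (f (X k)) + (inner (V k) (y - X k) - (norm (y - X k))\<^sup>2 / (2 * lam)))
        \<longlonglongrightarrow> a + (inner v (y - x) - (norm (y - x))\<^sup>2 / (2 * lam))"
      using fX a X V lam by (intro tendsto_intros) auto
    then have "a + (inner v (y - x) - (norm (y - x))\<^sup>2 / (2 * lam)) \<le> r" using le by (intro LIMSEQ_le_const2) auto
    then show ?thesis using a real by simp
  qed
  moreover have "x \<in> edom f" using a unfolding edom_def by simp
  ultimately show ?thesis unfolding prox_subdiff_def by blast
qed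

lemma csub_to_lim:
  fixes h :: "'a::real_inner \<Rightarrow> ereal"
  assumes fin: "\<bar>h x\<bar> \<noteq> \<infinity>" and sg: "\<forall>y. h x + ereal (inner w (y - x)) \<le> h y"
  shows "w \<in> lim_subdiff h x"
proof -
  have "w \<in> reg_subdiff h x"
  proof -
    have "h x + ereal (inner w (y - x) - e * norm (y - x)) \<le> h y" if "e > 0" for e y
    proof -
      have "h x + ereal (inner w (y - x) - e * norm (y - x)) \<le> h x + ereal (inner w (y - x))"
        using that by (intro add_left_mono) simp
      also have "\<dots> \<le> h y" using sg by blast
      finally show ?thesis .
    qed
    then show ?thesis using fin unfolding reg_subdiff_def by (auto intro: exI[of _ 1])
  qed
  then show ?thesis unfolding lim_subdiff_def using fin
    by (intro CollectI conjI exI[of _ "\<lambda>k. x"] exI[of _ "\<lambda>k. w"]) auto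
qed

lemma sub_to_prox_map:
  fixes f :: "'a::real_inner \<Rightarrow> ereal"
  assumes lam: "lam > 0" and v: "v \<in> prox_subdiff lam f x"
  shows "x \<in> prox_map f lam (x + lam *\<^sub>R v)"
proof -
  have "v + (1/lam) *\<^sub>R (x - (x + lam *\<^sub>R v)) = 0" using lam by simp
  then show ?thesis using v unfolding prox_subdiff_iff[OF lam, where z = "x + lam *\<^sub>R v"] prox_map_def
    by simp
qed

lemma prox_map_to_sub:
  fixes f :: "'a::real_inner \<Rightarrow> ereal"
  assumes lam: "lam > 0" and y: "y \<in> prox_map f lam z" and dom: "y \<in> edom f"
  shows "(1/lam) *\<^sub>R (z - y) \<in> prox_subdiff lam f y"
proof -
  have "(1/lam) *\<^sub>R (z - y) + (1/lam) *\<^sub>R (y - z) = 0" by (simp add: algebra_simps)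
  then show ?thesis using y dom unfolding prox_subdiff_iff[OF lam, where z = z] prox_map_def
    by simp
qed

lemma A_convex:
  fixes f :: "'a::real_inner \<Rightarrow> ereal"
  assumes lam: "lam > 0" and nm: "\<forall>w. f w \<noteq> -\<infinity>" and cd: "convex (edom f)"
    and A: "\<forall>x\<in>edom f. prox_subdiff lam f x \<noteq> {}"
  shows "econvex (\<lambda>x. f x + ereal (jfun x / lam))" (is "econvex ?g")
  unfolding econvex_def
proof (rule convexI)
  fix X Y :: "'a \<times> real" and u v :: real
  assume X: "X \<in> epigraph ?g" and Y: "Y \<in> epigraph ?g" and uv: "0 \<le> u" "0 \<le> v" "u + v = 1"
  obtain x1 t1 where Xd: "X = (x1, t1)" by (cases X)
  obtain x2 t2 where Yd: "Y = (x2, t2)" by (cases Y)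
  have h1: "?g x1 \<le> ereal t1" "?g x2 \<le> ereal t2" using X Y Xd Yd unfolding epigraph_def by auto
  have d1: "x1 \<in> edom f" "x2 \<in> edom f" using h1 unfolding edom_def
    by (cases "f x1"; simp; cases "f x2"; simp)+
  define x where "x = u *\<^sub>R x1 + v *\<^sub>R x2"
  have "x \<in> edom f" unfolding x_def using cd d1 uv by (intro convexD) auto
  then obtain p where p: "p \<in> prox_subdiff lam f x" using A by blast
  define w where "w = p + (1/lam) *\<^sub>R x"
  have gx: "?g x + ereal (inner w (y - x)) \<le> ?g y" for y using prox_to_gsub[OF lam p] unfolding w_def by simp
  obtain c where c: "?g x = ereal c" using \<open>x \<in> edom f\<close> nm unfolding edom_def by (cases "f x") auto
  have "?g x + ereal (inner w (x1 - x)) \<le> ereal t1" using gx[of x1] h1(1) by (rule order_trans)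
  then have "ereal (c + inner w (x1 - x)) \<le> ereal t1" using c by simp
  then have e1: "c + inner w (x1 - x) \<le> t1" by simp
  have "?g x + ereal (inner w (x2 - x)) \<le> ereal t2" using gx[of x2] h1(2) by (rule order_trans)
  then have "ereal (c + inner w (x2 - x)) \<le> ereal t2" using c by simp
  then have e2: "c + inner w (x2 - x) \<le> t2" by simp
  have "u * (c + inner w (x1 - x)) + v * (c + inner w (x2 - x)) \<le> u * t1 + v * t2"
    using e1 e2 uv by (intro add_mono mult_left_mono) auto
  moreover have "u * (c + inner w (x1 - x)) + v * (c + inner w (x2 - x)) = c"
  proof -
    have "u * inner w (x1 - x) + v * inner w (x2 - x) = inner w (u *\<^sub>R x1 + v *\<^sub>R x2 - (u + v) *\<^sub>R x)"
      by (simp add: inner_diff_right inner_add_right ring_distribs)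
    also have "\<dots> = 0" using uv unfolding x_def by simp
    finally have z: "u * inner w (x1 - x) + v * inner w (x2 - x) = 0" .
    have "u * (c + inner w (x1 - x)) + v * (c + inner w (x2 - x)) = (u + v) * c + (u * inner w (x1 - x) + v * inner w (x2 - x))"
      by (simp add: ring_distribs)
    then show ?thesis using z uv by simp
  qed
  ultimately have "?g x \<le> ereal (u * t1 + v * t2)" using c by simp
  then show "u *\<^sub>R X + v *\<^sub>R Y \<in> epigraph ?g" unfolding Xd Yd epigraph_def x_def by simp
qed

lemma prox_monotone:
  fixes f :: "'a::real_inner \<Rightarrow> ereal"
  assumes lam: "lam > 0" and nm: "\<forall>w. f w \<noteq> -\<infinity>" and ne: "edom f \<noteq> {}"
  shows "monotone_map (prox_map f lam)"
  unfolding monotone_map_def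
proof (intro allI impI)
  fix z1 z2 y1 y2 assume y1: "y1 \<in> prox_map f lam z1" and y2: "y2 \<in> prox_map f lam z2"
  obtain w0 where w0: "f w0 < \<infinity>" using ne unfolding edom_def by auto
  have fin: "\<exists>r. f y = ereal r" if "y \<in> prox_map f lam z" for y z
  proof -
    have "f y + ereal ((norm (y - z))\<^sup>2 / (2 * lam)) \<le> f w0 + ereal ((norm (w0 - z))\<^sup>2 / (2 * lam))"
      using that unfolding prox_map_def by blast
    then have "f y \<noteq> \<infinity>" using w0 by auto
    then show ?thesis using nm by (cases "f y") auto
  qed
  obtain r1 r2 where r: "f y1 = ereal r1" "f y2 = ereal r2" using fin y1 y2 by blast
  have "f y1 + ereal ((norm (y1 - z1))\<^sup>2 / (2 * lam)) \<le> f y2 + ereal ((norm (y2 - z1))\<^sup>2 / (2 * lam))"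
    using y1 unfolding prox_map_def by blast
  then have i1: "r1 + (norm (y1 - z1))\<^sup>2 / (2 * lam) \<le> r2 + (norm (y2 - z1))\<^sup>2 / (2 * lam)" using r by simp
  have "f y2 + ereal ((norm (y2 - z2))\<^sup>2 / (2 * lam)) \<le> f y1 + ereal ((norm (y1 - z2))\<^sup>2 / (2 * lam))"
    using y2 unfolding prox_map_def by blast
  then have i2: "r2 + (norm (y2 - z2))\<^sup>2 / (2 * lam) \<le> r1 + (norm (y1 - z2))\<^sup>2 / (2 * lam)" using r by simp
  have "(norm (y1 - z1))\<^sup>2 + (norm (y2 - z2))\<^sup>2 \<le> (norm (y2 - z1))\<^sup>2 + (norm (y1 - z2))\<^sup>2"
  proof -
    have "((norm (y1 - z1))\<^sup>2 + (norm (y2 - z2))\<^sup>2) / (2 * lam) \<le> ((norm (y2 - z1))\<^sup>2 + (norm (y1 - z2))\<^sup>2) / (2 * lam)"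
      using i1 i2 by (simp add: add_divide_distrib)
    then show ?thesis using lam by (simp add: divide_right_mono_neg divide_le_cancel)
  qed
  moreover have "(norm (y2 - z1))\<^sup>2 + (norm (y1 - z2))\<^sup>2 - (norm (y1 - z1))\<^sup>2 - (norm (y2 - z2))\<^sup>2
      = 2 * inner (z1 - z2) (y1 - y2)"
    unfolding power2_norm_eq_inner inner_diff_left inner_diff_right
    by (simp only: inner_commute[of y1 z1] inner_commute[of y1 z2] inner_commute[of y2 z1] inner_commute[of y2 z2]) algebra
  ultimately show "inner (z1 - z2) (y1 - y2) \<ge> 0" by linarith
qed

lemma maxmono_convex:
  assumes "maximal_monotone T" shows "convex (T x)"
proof (rule convexI)
  fix u1 u2 and a b :: real assume u: "u1 \<in> T x" "u2 \<in> T x" "0 \<le> a" "0 \<le> b" "a + b = 1"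
  have mono: "\<forall>x y u v. u \<in> T x \<longrightarrow> v \<in> T y \<longrightarrow> inner (x - y) (u - v) \<ge> 0"
    and mx: "\<forall>x u. (\<forall>y v. v \<in> T y \<longrightarrow> inner (x - y) (u - v) \<ge> 0) \<longrightarrow> u \<in> T x"
    using assms unfolding maximal_monotone_def monotone_map_def by blast+
  have "inner (x - y) (a *\<^sub>R u1 + b *\<^sub>R u2 - v) \<ge> 0" if "v \<in> T y" for y v
  proof -
    have "a *\<^sub>R u1 + b *\<^sub>R u2 - v = a *\<^sub>R (u1 - v) + b *\<^sub>R (u2 - v)" using u(5)
      by (simp add: algebra_simps) (metis add.commute scaleR_add_left scaleR_one add_diff_cancel)
    then have "inner (x - y) (a *\<^sub>R u1 + b *\<^sub>R u2 - v) = a * inner (x - y) (u1 - v) + b * inner (x - y) (u2 - v)"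
      by (simp add: inner_add_right)
    moreover have "inner (x - y) (u1 - v) \<ge> 0" "inner (x - y) (u2 - v) \<ge> 0" using mono u that by blast+
    ultimately show ?thesis using u by simp
  qed
  then show "a *\<^sub>R u1 + b *\<^sub>R u2 \<in> T x" using mx by blast
qed

lemma real_small_t:
  fixes D K :: real
  assumes "\<And>t. 0 < t \<Longrightarrow> t \<le> 1 \<Longrightarrow> D \<le> t * K" "K \<ge> 0"
  shows "D \<le> 0"
proof (rule ccontr)
  assume "\<not> D \<le> 0" then have D: "D > 0" by simp
  define t where "t = D / (2 * K + 1 + D)"
  have pos: "2 * K + 1 + D > 0" using D assms(2) by simp
  have t: "0 < t" "t \<le> 1" unfolding t_def using D assms(2) pos by (auto simp: field_simps)
  then have "D \<le> t * K" using assms(1) by blast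
  then have "D * (2 * K + 1 + D) \<le> D * K" unfolding t_def using pos by (simp add: field_simps)
  then have "2 * K + 1 + D \<le> K" using D by simp
  then show False using D assms(2) by simp
qed

lemma strong_min_subgrad:
  fixes h :: "'a::real_inner \<Rightarrow> ereal"
  assumes lam: "lam > 0" and cv: "econvex h" and hv: "h v = ereal hv"
    and mn: "\<forall>w. h v + ereal ((norm v)\<^sup>2 / (2 * lam) - inner q v) \<le> h w + ereal ((norm w)\<^sup>2 / (2 * lam) - inner q w)"
  shows "h v + ereal (inner (q - (1/lam) *\<^sub>R v) (w - v)) \<le> h w"
proof (cases "h w")
  case PInf then show ?thesis by simp
next
  case MInf then show ?thesis using mn[rule_format, of w] hv by simp
next
  case (real hw)
  define d where "d = w - v"
  define D where "D = hv - hw + inner (q - (1/lam) *\<^sub>R v) d"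
  define K where "K = (norm d)\<^sup>2 / (2 * lam)"
  have "D \<le> t * K" if t: "0 < t" "t \<le> 1" for t
  proof -
    define wt where "wt = (1 - t) *\<^sub>R v + t *\<^sub>R w"
    have wt: "wt = v + t *\<^sub>R d" unfolding wt_def d_def by (simp add: algebra_simps)
    have up: "h wt \<le> ereal ((1 - t) * hv + t * hw)" unfolding wt_def
      using econvexD[OF cv, of v hv w hw t] hv real t by simp
    have lo: "h v + ereal ((norm v)\<^sup>2 / (2 * lam) - inner q v) \<le> h wt + ereal ((norm wt)\<^sup>2 / (2 * lam) - inner q wt)"
      using mn by blast
    have "h v + ereal ((norm v)\<^sup>2 / (2 * lam) - inner q v) \<le> ereal ((1 - t) * hv + t * hw) + ereal ((norm wt)\<^sup>2 / (2 * lam) - inner q wt)"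
      using lo up by (meson add_right_mono order_trans)
    then have r: "hv + ((norm v)\<^sup>2 / (2 * lam) - inner q v) \<le> (1 - t) * hv + t * hw + ((norm wt)\<^sup>2 / (2 * lam) - inner q wt)"
      using hv by simp
    have n: "(norm wt)\<^sup>2 = (norm v)\<^sup>2 + 2 * t * inner v d + t\<^sup>2 * (norm d)\<^sup>2"
      unfolding wt using norm_add_sq[of v "t *\<^sub>R d"] by (simp add: power2_eq_square)
    have qi: "inner q wt = inner q v + t * inner q d" unfolding wt by (simp add: inner_add_right)
    have di: "inner (q - (1/lam) *\<^sub>R v) d = inner q d - inner v d / lam" by (simp add: inner_diff_left)
    have "t * D \<le> t * (t * K)"
      using r lam unfolding n qi D_def di K_def by (simp add: field_simps power2_eq_square)
    then show ?thesis using t by simp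
  qed
  moreover have "K \<ge> 0" unfolding K_def using lam by simp
  ultimately have "D \<le> 0" by (intro real_small_t) auto
  then show ?thesis using hv real unfolding D_def d_def by simp
qed

lemma coercive_bound:
  fixes f :: "'a::real_inner \<Rightarrow> ereal"
  assumes lam: "lam > 0" and mu: "mu > lam" and bnd: "\<forall>w. ereal (M - (norm (w - x0))\<^sup>2 / (2 * mu)) \<le> f w"
    and k: "k \<ge> 1"
  shows "ereal ((k / (2 * lam) - 1 / (2 * mu)) * (norm w)\<^sup>2 - (norm x0 / mu + norm q) * norm w - ((norm x0)\<^sup>2 / (2 * mu) - M))
     \<le> f w + ereal (k * (norm w)\<^sup>2 / (2 * lam) - inner q w)" (is "ereal ?L \<le> f w + ereal ?R")
proof -
  have mu0: "mu > 0" using lam mu by simp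
  have t: "norm (w - x0) \<le> norm w + norm x0" by (rule norm_triangle_ineq4)
  have "(norm (w - x0))\<^sup>2 \<le> (norm w + norm x0)\<^sup>2" using t by (intro power_mono) auto
  then have sq: "(norm (w - x0))\<^sup>2 / (2 * mu) \<le> ((norm w)\<^sup>2 + 2 * norm w * norm x0 + (norm x0)\<^sup>2) / (2 * mu)"
    using mu0 by (intro divide_right_mono) (auto simp: power2_eq_square algebra_simps)
  have cs: "inner q w \<le> norm q * norm w" by (rule norm_cauchy_schwarz)
  have "(k / (2 * lam) - 1 / (2 * mu)) * (norm w)\<^sup>2 - (norm x0 / mu + norm q) * norm w - ((norm x0)\<^sup>2 / (2 * mu) - M)
     \<le> M - (norm (w - x0))\<^sup>2 / (2 * mu) + (k * (norm w)\<^sup>2 / (2 * lam) - inner q w)"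
  proof -
    have e: "((norm w)\<^sup>2 + 2 * norm w * norm x0 + (norm x0)\<^sup>2) / (2 * mu)
        = (norm w)\<^sup>2 / (2 * mu) + norm x0 / mu * norm w + (norm x0)\<^sup>2 / (2 * mu)"
      using mu0 by (simp add: field_simps)
    have e2: "(k / (2 * lam) - 1 / (2 * mu)) * (norm w)\<^sup>2 = k * (norm w)\<^sup>2 / (2 * lam) - (norm w)\<^sup>2 / (2 * mu)"
      by (simp add: algebra_simps)
    show ?thesis using sq cs unfolding e e2 by (simp add: algebra_simps)
  qed
  then have "ereal ?L \<le> ereal (M - (norm (w - x0))\<^sup>2 / (2 * mu)) + ereal ?R"
    by simp
  also have "\<dots> \<le> f w + ereal ?R"
    using bnd by (intro add_right_mono) blast
  finally show ?thesis .
qed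

lemma coercive_delta:
  fixes lam mu k :: real
  assumes lam: "lam > 0" and mu: "mu > lam" and k: "k \<ge> 1"
  shows "k / (2 * lam) - 1 / (2 * mu) > 0"
proof -
  have "1 / (2 * mu) < 1 / (2 * lam)" using lam mu by (simp add: field_simps)
  also have "\<dots> \<le> k / (2 * lam)" using lam k by (simp add: divide_right_mono)
  finally show ?thesis by simp
qed

lemma lscp_quad:
  fixes f :: "'a::real_inner \<Rightarrow> ereal"
  assumes "lscp f" "\<forall>w. f w \<noteq> -\<infinity>" "lam > 0"
  shows "lscp (\<lambda>w. f w + ereal (k * (norm w)\<^sup>2 / (2 * lam) - inner q w))"
  by (rule lscp_add[OF assms(1,2)]) (intro continuous_intros, use assms(3) in auto)

lemma ereal_shift2: "ereal a \<le> e + ereal b \<Longrightarrow> ereal (a - c) \<le> e + ereal (b - c)"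
  by (cases e) auto

lemma prox_map_argmin:
  fixes f :: "'a::real_inner \<Rightarrow> ereal"
  assumes lam: "lam > 0"
  shows "prox_map f lam (lam *\<^sub>R p) = {w. \<forall>w'. f w + ereal ((norm w)\<^sup>2 / (2 * lam) - inner p w)
                                       \<le> f w' + ereal ((norm w')\<^sup>2 / (2 * lam) - inner p w')}"
proof -
  have e: "(norm (w - lam *\<^sub>R p))\<^sup>2 / (2 * lam) = ((norm w)\<^sup>2 / (2 * lam) - inner p w) + lam * (norm p)\<^sup>2 / 2" for w
  proof -
    have "(norm (w - lam *\<^sub>R p))\<^sup>2 = (norm w)\<^sup>2 - 2 * lam * inner p w + lam\<^sup>2 * (norm p)\<^sup>2"
      using norm_add_sq[of w "- (lam *\<^sub>R p)"] by (simp add: inner_commute power2_eq_square)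
    then show ?thesis using lam by (simp add: field_simps power2_eq_square)
  qed
  have "(e1 + ereal (A + C) \<le> e2 + ereal (B + C)) \<longleftrightarrow> (e1 + ereal A \<le> e2 + ereal B)" for e1 e2 :: ereal and A B C
    by (cases e1; cases e2) auto
  then show ?thesis unfolding prox_map_def e by simp
qed

lemma B_to_A:
  fixes f :: "'a::euclidean_space \<Rightarrow> ereal"
  assumes lam: "lam > 0" and nm: "\<forall>w. f w \<noteq> -\<infinity>" and lsc: "lscp f"
    and mu: "mu > lam" and bnd: "\<forall>w. ereal (M - (norm (w - x0))\<^sup>2 / (2 * mu)) \<le> f w"
    and cvx: "\<forall>z. convex (prox_map f lam z)"
    and x: "x \<in> edom f"
    and p: "p \<in> lim_subdiff (conv_fun (\<lambda>x. f x + ereal (jfun x / lam))) x"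
  shows "prox_subdiff lam f x \<noteq> {}"
proof -
  define g where "g = (\<lambda>x. f x + ereal (jfun x / lam))"
  define G where "G = conv_fun g"
  have sg: "G x + ereal (inner p (y - x)) \<le> G y" for y
    using lim_to_convex[OF econvex_conv_fun p[folded g_def]] unfolding G_def .
  have "\<bar>G x\<bar> \<noteq> \<infinity>" using p unfolding lim_subdiff_def G_def g_def by simp
  then obtain \<gamma> where \<gamma>: "G x = ereal \<gamma>" by (cases "G x") auto
  define \<phi> where "\<phi> = (\<lambda>w. f w + ereal (1 * (norm w)\<^sup>2 / (2 * lam) - inner p w))"
  define m where "m = \<gamma> - inner p x"
  have gj: "g w = f w + ereal ((norm w)\<^sup>2 / (2 * lam))" for w unfolding g_def jfun_def by simp
  have \<phi>ge: "ereal m \<le> \<phi> w" for w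
  proof -
    have "ereal (\<gamma> + inner p (w - x)) \<le> G w" using sg[of w] \<gamma> by simp
    also have "\<dots> \<le> g w" unfolding G_def by (rule conv_fun_le)
    finally have "ereal (\<gamma> + inner p (w - x)) \<le> f w + ereal ((norm w)\<^sup>2 / (2 * lam))" unfolding gj .
    then have "ereal (\<gamma> + inner p (w - x) - inner p w) \<le> f w + ereal ((norm w)\<^sup>2 / (2 * lam) - inner p w)"
      by (rule ereal_shift2)
    then show ?thesis unfolding \<phi>_def m_def by (simp add: inner_diff_right)
  qed
  have lsc\<phi>: "lscp \<phi>" unfolding \<phi>_def by (rule lscp_quad[OF lsc nm lam])
  define S where "S = {w. \<forall>w'. \<phi> w \<le> \<phi> w'}"
  have SP: "S = prox_map f lam (lam *\<^sub>R p)" unfolding S_def \<phi>_def prox_map_argmin[OF lam] by simp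
  have Sc: "convex S" "closed S" using cvx SP lscp_closed_argmin[OF lsc\<phi>] unfolding S_def by auto
  have "x \<in> S"
  proof (rule ccontr)
    assume xS: "x \<notin> S"
    obtain a b where ab: "inner a x < b" "\<forall>s\<in>S. inner a s > b"
      using separating_hyperplane_closed_point[OF Sc xS] by blast
    define F where "F = {w. inner a w \<le> b}"
    have Fc: "closed F" unfolding F_def by (rule closed_halfspace_le)
    have xF: "x \<in> F" using ab unfolding F_def by simp
    have \<phi>x: "\<phi> x < \<infinity>" using x unfolding edom_def \<phi>_def by (cases "f x") auto
    define \<delta> where "\<delta> = 1 / (2 * lam) - 1 / (2 * mu)"
    define \<alpha> where "\<alpha> = norm x0 / mu + norm p"
    define \<beta> where "\<beta> = (norm x0)\<^sup>2 / (2 * mu) - M"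
    have \<delta>: "\<delta> > 0" unfolding \<delta>_def using coercive_delta[OF lam mu, of 1] by simp
    have cb: "ereal (\<delta> * (norm w)\<^sup>2 - \<alpha> * norm w - \<beta>) \<le> \<phi> w" for w
      unfolding \<phi>_def \<delta>_def \<alpha>_def \<beta>_def using coercive_bound[OF lam mu bnd, of 1 w p] by simp
    obtain w1 where w1: "w1 \<in> F" "\<forall>w\<in>F. \<phi> w1 \<le> \<phi> w"
      using lscp_min_coercive[OF lsc\<phi> Fc xF \<phi>x \<delta> cb] by blast
    have gt: "ereal m < \<phi> w1"
    proof (rule ccontr)
      assume "\<not> ereal m < \<phi> w1"
      then have "\<phi> w1 \<le> ereal m" by simp
      then have "w1 \<in> S" unfolding S_def using \<phi>ge order_trans by blast
      then show False using ab w1 unfolding F_def by force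
    qed
    obtain \<eta> where \<eta>: "\<eta> > 0" "\<forall>w\<in>F. ereal (m + \<eta>) \<le> \<phi> w"
    proof (cases "\<phi> w1")
      case (real r1)
      then show ?thesis using that[of "r1 - m"] gt w1 by auto
    next
      case PInf
      then show ?thesis using that[of 1] w1 by force
    next
      case MInf then show ?thesis using gt by simp
    qed
    obtain R where R: "R \<ge> 1" "\<forall>t\<ge>R. \<delta> * t^2 - (\<alpha> + norm a) * t - \<beta> > m + \<bar>b\<bar>"
      using coercive_radius[OF \<delta>] by blast
    define \<epsilon> where "\<epsilon> = min 1 (\<eta> / (\<bar>b\<bar> + norm a * R + 1))"
    have den: "\<bar>b\<bar> + norm a * R + 1 > 0" using R by (simp add: add_nonneg_pos)
    have \<epsilon>: "\<epsilon> > 0" "\<epsilon> \<le> 1" "\<epsilon> * (\<bar>b\<bar> + norm a * R) \<le> \<eta>"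
    proof -
      show "\<epsilon> > 0" "\<epsilon> \<le> 1" unfolding \<epsilon>_def using \<eta> den by auto
      have "\<epsilon> * (\<bar>b\<bar> + norm a * R) \<le> (\<eta> / (\<bar>b\<bar> + norm a * R + 1)) * (\<bar>b\<bar> + norm a * R + 1)"
        unfolding \<epsilon>_def using den \<eta> R by (intro mult_mono) auto
      then show "\<epsilon> * (\<bar>b\<bar> + norm a * R) \<le> \<eta>" using den by simp
    qed
    have cs: "- inner a w \<le> norm a * norm w" for w
      using Cauchy_Schwarz_ineq2[of a w] by linarith
    have key: "ereal (m + \<epsilon> * (b - inner a w)) \<le> \<phi> w" for w
    proof (cases "b - inner a w \<le> 0")
      case True
      then have "\<epsilon> * (b - inner a w) \<le> 0" using \<epsilon> by (simp add: mult_nonneg_nonpos)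
      then have "ereal (m + \<epsilon> * (b - inner a w)) \<le> ereal m" by simp
      also have "\<dots> \<le> \<phi> w" by (rule \<phi>ge)
      finally show ?thesis .
    next
      case False
      then have wF: "w \<in> F" unfolding F_def by simp
      show ?thesis
      proof (cases "norm w \<le> R")
        case True
        have "\<epsilon> * (b - inner a w) \<le> \<epsilon> * (\<bar>b\<bar> + norm a * R)"
        proof (intro mult_left_mono)
          have "norm a * norm w \<le> norm a * R" using True by (intro mult_left_mono) auto
          then show "b - inner a w \<le> \<bar>b\<bar> + norm a * R" using cs[of w] by linarith
        qed (use \<epsilon> in simp)
        then have "m + \<epsilon> * (b - inner a w) \<le> m + \<eta>" using \<epsilon>(3) by linarith
        then have "ereal (m + \<epsilon> * (b - inner a w)) \<le> ereal (m + \<eta>)" by simp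
        also have "\<dots> \<le> \<phi> w" using \<eta> wF by blast
        finally show ?thesis .
      next
        case nF: False
        have "\<epsilon> * (b - inner a w) \<le> 1 * (b - inner a w)" using False \<epsilon> by (intro mult_right_mono) auto
        also have "\<dots> \<le> \<bar>b\<bar> + norm a * norm w" using cs[of w] abs_ge_self[of b] by simp
        finally have i1: "\<epsilon> * (b - inner a w) \<le> \<bar>b\<bar> + norm a * norm w" .
        have "\<delta> * (norm w)^2 - (\<alpha> + norm a) * norm w - \<beta> > m + \<bar>b\<bar>" using R nF by simp
        then have "m + \<epsilon> * (b - inner a w) \<le> \<delta> * (norm w)\<^sup>2 - \<alpha> * norm w - \<beta>"
          using i1 by (simp add: algebra_simps)
        then have "ereal (m + \<epsilon> * (b - inner a w)) \<le> ereal (\<delta> * (norm w)\<^sup>2 - \<alpha> * norm w - \<beta>)" by simp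
        also have "\<dots> \<le> \<phi> w" by (rule cb)
        finally show ?thesis .
      qed
    qed
    define h where "h = (\<lambda>w. ereal (inner (p - \<epsilon> *\<^sub>R a) w + (m + \<epsilon> * b)))"
    have hc: "econvex h" unfolding h_def by (rule econvex_affine)
    have hle: "\<forall>y. h y \<le> g y"
    proof
      fix w
      have "ereal (m + \<epsilon> * (b - inner a w)) \<le> f w + ereal ((norm w)\<^sup>2 / (2 * lam) - inner p w)"
        using key[of w] unfolding \<phi>_def by simp
      then have "ereal (m + \<epsilon> * (b - inner a w) - (- inner p w)) \<le> f w + ereal ((norm w)\<^sup>2 / (2 * lam) - inner p w - (- inner p w))"
        by (rule ereal_shift2)
      moreover have eq: "inner (p - \<epsilon> *\<^sub>R a) w + (m + \<epsilon> * b) = m + \<epsilon> * (b - inner a w) - (- inner p w)"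
        by (simp add: inner_diff_left algebra_simps)
      moreover have eq2: "(norm w)\<^sup>2 / (2 * lam) - inner p w - (- inner p w) = (norm w)\<^sup>2 / (2 * lam)" by simp
      ultimately show "h w \<le> g w" unfolding h_def gj by (simp only: eq eq2)
    qed
    have "h x \<le> G x" unfolding G_def by (rule conv_fun_ge[OF hc hle])
    moreover have "h x = ereal (\<gamma> + \<epsilon> * (b - inner a x))"
      unfolding h_def m_def by (simp add: inner_diff_left algebra_simps)
    moreover have "\<epsilon> * (b - inner a x) > 0" using \<epsilon> ab by simp
    ultimately show False using \<gamma> by simp
  qed
  then have "x \<in> prox_map f lam (lam *\<^sub>R p)" using SP by simp
  then show ?thesis using prox_map_to_sub[OF lam _ x] by blast
qed

lemma A_maximal:
  fixes f :: "'a::euclidean_space \<Rightarrow> ereal"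
  assumes lam: "lam > 0" and nm: "\<forall>w. f w \<noteq> -\<infinity>" and lsc: "lscp f"
    and mu: "mu > lam" and bnd: "\<forall>w. ereal (M - (norm (w - x0))\<^sup>2 / (2 * mu)) \<le> f w"
    and cv: "econvex (\<lambda>x. f x + ereal (jfun x / lam))"
    and w0: "w0 \<in> edom f"
  shows "maximal_monotone (prox_map f lam)"
proof -
  define g where "g = (\<lambda>x. f x + ereal (jfun x / lam))"
  have mono: "monotone_map (prox_map f lam)" using prox_monotone[OF lam nm] w0 by blast
  have "u \<in> prox_map f lam x" if H: "\<forall>y v. v \<in> prox_map f lam y \<longrightarrow> inner (x - y) (u - v) \<ge> 0" for x u
  proof -
    define q where "q = (1/lam) *\<^sub>R (x + u)"
    define \<psi> where "\<psi> = (\<lambda>w. f w + ereal (2 * (norm w)\<^sup>2 / (2 * lam) - inner q w))"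
    have lsc\<psi>: "lscp \<psi>" unfolding \<psi>_def by (rule lscp_quad[OF lsc nm lam])
    define \<delta> where "\<delta> = 2 / (2 * lam) - 1 / (2 * mu)"
    have \<delta>: "\<delta> > 0" unfolding \<delta>_def using coercive_delta[OF lam mu, of 2] by simp
    have cb: "ereal (\<delta> * (norm w)\<^sup>2 - (norm x0 / mu + norm q) * norm w - ((norm x0)\<^sup>2 / (2 * mu) - M)) \<le> \<psi> w" for w
      unfolding \<psi>_def \<delta>_def using coercive_bound[OF lam mu bnd, of 2 w q] by simp
    have \<psi>0: "\<psi> w0 < \<infinity>" using w0 unfolding edom_def \<psi>_def by (cases "f w0") auto
    obtain v where v: "\<forall>w\<in>UNIV. \<psi> v \<le> \<psi> w"
      using lscp_min_coercive[OF lsc\<psi> closed_UNIV _ \<psi>0 \<delta> cb] by blast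
    have "f v \<noteq> \<infinity>"
    proof
      assume "f v = \<infinity>" then have "\<psi> v = \<infinity>" unfolding \<psi>_def by simp
      then show False using v \<psi>0 by (metis UNIV_I not_le)
    qed
    then obtain fv where fv: "f v = ereal fv" using nm by (cases "f v") auto
    have vdom: "v \<in> edom f" using fv unfolding edom_def by simp
    have gw: "g w + ereal ((norm w)\<^sup>2 / (2 * lam) - inner q w) = \<psi> w" for w
    proof -
      have e: "jfun w / lam + ((norm w)\<^sup>2 / (2 * lam) - inner q w) = 2 * (norm w)\<^sup>2 / (2 * lam) - inner q w"
        unfolding jfun_def by (simp add: field_simps)
      have "g w + ereal ((norm w)\<^sup>2 / (2 * lam) - inner q w) = f w + ereal (jfun w / lam + ((norm w)\<^sup>2 / (2 * lam) - inner q w))"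
        unfolding g_def by (simp add: add.assoc)
      then show ?thesis unfolding \<psi>_def e .
    qed
    have gv: "g v = ereal (fv + jfun v / lam)" unfolding g_def using fv by simp
    have sg: "g v + ereal (inner (q - (1/lam) *\<^sub>R v) (w - v)) \<le> g w" for w
      using strong_min_subgrad[OF lam cv[folded g_def] gv] v gw by simp
    define s where "s = (q - (1/lam) *\<^sub>R v) - (1/lam) *\<^sub>R v"
    have "s \<in> prox_subdiff lam f v" unfolding s_def
      using gsub_to_prox[OF lam vdom] sg unfolding g_def by blast
    then have vP: "v \<in> prox_map f lam (v + lam *\<^sub>R s)" by (rule sub_to_prox_map[OF lam])
    have ys: "v + lam *\<^sub>R s = x + u - v" unfolding s_def q_def using lam by (simp add: algebra_simps)
    have "inner (x - (x + u - v)) (u - v) \<ge> 0" using H vP ys by metis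
    then have "- (norm (u - v))\<^sup>2 \<ge> 0" by (simp add: power2_norm_eq_inner inner_diff_left inner_diff_right inner_commute)
    then have "u = v" by simp
    then show ?thesis using vP ys by simp
  qed
  then show ?thesis using mono unfolding maximal_monotone_def by blast
qed

theorem mainTheorem6:
  fixes f :: "'a::euclidean_space \<Rightarrow> ereal" and lam :: real
  assumes "proper_fun f" and "lsc_fun f" and "prox_bounded f"
    and "prox_threshold f > 0"
    and "0 < lam" and "ereal lam < prox_threshold f"
    and "convex (edom f)"
  defines "g \<equiv> (\<lambda>x. f x + ereal (jfun x / lam))"
  defines "A \<equiv> (\<forall>x\<in>edom f. prox_subdiff lam f x \<noteq> {})"
    and "B \<equiv> (prox_map f lam = conv_map (prox_map f lam) \<and>
              subdiff_dom (lim_subdiff (conv_fun g)) = edom f)"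
    and "C \<equiv> (maximal_monotone (prox_map f lam) \<and>
              subdiff_dom (lim_subdiff (conv_fun g)) = edom f)"
    and "D \<equiv> (econvex g \<and> subdiff_dom (lim_subdiff f) = edom f)"
    and "E \<equiv> (prox_subdiff lam f = lim_subdiff f \<and> subdiff_dom (lim_subdiff f) = edom f)"
  shows "(A \<longleftrightarrow> B) \<and> (A \<longleftrightarrow> C) \<and> (A \<longleftrightarrow> D) \<and> (A \<longleftrightarrow> E)"
proof -
  have lam: "lam > 0" using assms(5) .
  have nm: "\<forall>w. f w \<noteq> -\<infinity>" and ne: "edom f \<noteq> {}" using assms(1) unfolding proper_fun_def by auto
  then obtain w0 where w0: "w0 \<in> edom f" by blast
  have lsc: "lscp f" using assms(2) by (rule lsc_fun_lscp)
  obtain mu x0 M where mu: "mu > lam" and bnd: "\<forall>w. ereal (M - (norm (w - x0))\<^sup>2 / (2 * mu)) \<le> f w"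
  proof -
    have "ereal lam < Sup {ereal l | l. l > 0 \<and> (\<exists>x. moreau_env f l x > -\<infinity>)}"
      using assms(6) unfolding prox_threshold_def .
    then obtain s where "s \<in> {ereal l | l. l > 0 \<and> (\<exists>x. moreau_env f l x > -\<infinity>)}" "ereal lam < s"
      using less_Sup_iff by blast
    then obtain l x0 where l: "l > lam" "moreau_env f l x0 > -\<infinity>" by auto
    define e where "e = moreau_env f l x0"
    obtain M where M: "ereal M \<le> e"
    proof (cases e)
      case (real r) then show ?thesis using that[of r] by simp
    next
      case PInf then show ?thesis using that[of 0] by simp
    next
      case MInf then show ?thesis using l unfolding e_def by simp
    qed
    have "ereal (M - (norm (w - x0))\<^sup>2 / (2 * l)) \<le> f w" for w
    proof -
      have "e \<le> f w + ereal ((norm (w - x0))\<^sup>2 / (2 * l))"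
        unfolding e_def moreau_env_def by (rule INF_lower) simp
      then have "ereal M \<le> f w + ereal ((norm (w - x0))\<^sup>2 / (2 * l))" using M by simp
      then show ?thesis by (cases "f w") auto
    qed
    then show ?thesis using that l by blast
  qed
  have domfin: "x \<in> edom f \<longleftrightarrow> \<bar>f x\<bar> \<noteq> \<infinity>" for x using nm unfolding edom_def by (cases "f x") auto
  have limdom: "subdiff_dom (lim_subdiff f) \<subseteq> edom f"
    unfolding subdiff_dom_def lim_subdiff_def using domfin by auto
  have gdom: "subdiff_dom (lim_subdiff g) \<subseteq> edom f"
  proof
    fix x assume "x \<in> subdiff_dom (lim_subdiff g)"
    then have "\<bar>g x\<bar> \<noteq> \<infinity>" unfolding subdiff_dom_def lim_subdiff_def by auto
    then show "x \<in> edom f" unfolding g_def edom_def by (cases "f x") auto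
  qed
  have AD: "A \<Longrightarrow> D"
  proof -
    assume a: A
    have cv: "econvex g" unfolding g_def using A_convex[OF lam nm assms(7)] a unfolding A_def by blast
    have "edom f \<subseteq> subdiff_dom (lim_subdiff f)"
      using a prox_in_lim[OF lam nm] unfolding A_def subdiff_dom_def by blast
    then show D unfolding D_def using cv limdom by blast
  qed
  have AE: "A \<Longrightarrow> E"
  proof -
    assume a: A
    then have d: D by (rule AD)
    have "prox_subdiff lam f x = lim_subdiff f x" for x
      using prox_in_lim[OF lam nm] lim_to_prox[OF lam] d unfolding D_def g_def by blast
    then show E using d unfolding D_def E_def by blast
  qed
  have DA: "D \<Longrightarrow> A"
  proof -
    assume d: D
    show A unfolding A_def
    proof
      fix x assume "x \<in> edom f"
      then obtain v where "v \<in> lim_subdiff f x" using d unfolding D_def subdiff_dom_def by blast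
      then show "prox_subdiff lam f x \<noteq> {}" using lim_to_prox[OF lam] d unfolding D_def g_def by blast
    qed
  qed
  have EA: "E \<Longrightarrow> A"
    unfolding E_def A_def subdiff_dom_def by auto
  have Agdom: "A \<Longrightarrow> subdiff_dom (lim_subdiff (conv_fun g)) = edom f"
  proof -
    assume a: A
    then have cv: "econvex g" using AD unfolding D_def by blast
    then have cg: "conv_fun g = g" by (rule conv_fun_id)
    have "edom f \<subseteq> subdiff_dom (lim_subdiff g)"
    proof
      fix x assume x: "x \<in> edom f"
      then obtain p where p: "p \<in> prox_subdiff lam f x" using a unfolding A_def by blast
      have "\<bar>g x\<bar> \<noteq> \<infinity>" using x domfin unfolding g_def by (cases "f x") auto
      then have "p + (1/lam) *\<^sub>R x \<in> lim_subdiff g x"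
        using prox_to_gsub[OF lam p] unfolding g_def by (intro csub_to_lim) auto
      then show "x \<in> subdiff_dom (lim_subdiff g)" unfolding subdiff_dom_def by blast
    qed
    moreover have "subdiff_dom (lim_subdiff g) \<subseteq> edom f"
      by (rule gdom)
    ultimately show ?thesis unfolding cg by blast
  qed
  have AC: "A \<Longrightarrow> C"
  proof -
    assume a: A
    then have cv: "econvex g" using AD unfolding D_def by blast
    have "maximal_monotone (prox_map f lam)"
      using A_maximal[OF lam nm lsc mu bnd cv[unfolded g_def] w0] .
    then show C unfolding C_def using Agdom a by blast
  qed
  have CB: "C \<Longrightarrow> B"
  proof -
    assume c: C
    then have cz: "convex (prox_map f lam z)" for z unfolding C_def using maxmono_convex by blast
    have "prox_map f lam = conv_map (prox_map f lam)" unfolding conv_map_def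
      by (intro ext) (metis cz convex_hull_eq)
    then show B using c unfolding B_def C_def by blast
  qed
  have BA: "B \<Longrightarrow> A"
  proof -
    assume b: B
    have cvx: "\<forall>z. convex (prox_map f lam z)"
    proof
      fix z
      have "prox_map f lam z = convex hull (prox_map f lam z)" using b unfolding B_def conv_map_def by metis
      then show "convex (prox_map f lam z)" by (metis convex_convex_hull)
    qed
    show A unfolding A_def
    proof
      fix x assume x: "x \<in> edom f"
      then obtain p where "p \<in> lim_subdiff (conv_fun g) x" using b unfolding B_def subdiff_dom_def by blast
      then show "prox_subdiff lam f x \<noteq> {}"
        using B_to_A[OF lam nm lsc mu bnd cvx x] unfolding g_def by blast
    qed
  qed
  show ?thesis using AC CB BA AD DA AE EA by blast
qed

end
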